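(* Let $\mathcal G=((V,E),(V_1,V_2,V_\Diamond),\delta,w)$ be a stochastic game and $\varphi$ a bounded prefix-independent objective. Consider the classes of the expected value vector $\mathsf r^*=(\mathbb{E}_v(\varphi))_{v\in V}$, and suppose exactly $m\ge1$ of them contain boundary vertices. Index the classes as $C_1,\dots,C_k$ so that $C_1,\dots,C_m$ are those containing boundary vertices, listed in increasing order of value, and $C_{m+1},\dots,C_k$ are those without boundary vertices, listed in increasing order of value. For each $1\le i\le m$ fix any boundary vertex $u_i$ of $C_i$ and for $1\le j\le k$ let $p_{i,j}=\sum_{v'\in E(u_i)\cap C_j}\delta(u_i)(v')$. Let $Q_B$ be the $m\times m$ matrix $(p_{i,j})_{1\le i,j\le m}$ and $I$ the $m\times m$ identity matrix. Then $I-Q_B$ is invertible.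
   Context: A stochastic game is $\mathcal{G}=((V,E),(V_1,V_2,V_\Diamond),\delta,w)$: a finite directed graph $(V,E)$ in which every vertex $v$ has a nonempty out-neighbour set $E(v)$, a partition of $V$ into Player 1, Player 2 and probabilistic vertices, a function $\delta$ giving each $v\in V_\Diamond$ a rational probability distribution $\delta(v)$ on $E(v)$, positive on every out-neighbour, and payoffs $w:E\to\mathbb{Q}$. Plays are infinite paths; deterministic strategies of Player $i$ map finite prefixes ending in $V_i$ to an out-neighbour of the last vertex; a strategy pair and initial vertex induce a probability measure on plays. An objective $\varphi$ is a Borel-measurable real function on plays; bounded if $|\varphi|\le W_\varphi$ for an integer $W_\varphi$; prefix-independent if plays with a common suffix get equal value. Player 1 maximises and Player 2 minimises the expectation; $\mathbb{E}_v(\varphi)=\sup_{\sigma_1}\inf_{\sigma_2}\mathbb{E}^{\sigma_1,\sigma_2}_v[\varphi]=\inf_{\sigma_2}\sup_{\sigma_1}\mathbb{E}^{\sigma_1,\sigma_2}_v[\varphi]$. For a real vector $\mathsf r$ indexed by $V$, its classes are the maximal nonempty sets of vertices on which $\mathsf r$ is constant (the constant being the class value); a vertex $v$ of class $C$ is a boundary vertex if $v\in V_\Diamond$ and $E(v)\not\subseteq C$. *)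

theory Defs
  imports "HOL-Probability.Probability" "Jordan_Normal_Form.Matrix"
begin

text \<open>Vertices are the elements of a finite type 'v (so V = UNIV).
  E v is the out-neighbour set of v; d u is the distribution at a probabilistic vertex u.\<close>

definition stochastic_game ::
  "'v::finite set \<Rightarrow> 'v set \<Rightarrow> 'v set \<Rightarrow> ('v \<Rightarrow> 'v set) \<Rightarrow> ('v \<Rightarrow> 'v \<Rightarrow> real) \<Rightarrow> bool" where
  "stochastic_game V1 V2 Vp E d \<longleftrightarrow>
     (\<forall>v. E v \<noteq> {}) \<and>
     V1 \<inter> V2 = {} \<and> V1 \<inter> Vp = {} \<and> V2 \<inter> Vp = {} \<and> V1 \<union> V2 \<union> Vp = UNIV \<and>
     (\<forall>u\<in>Vp. (\<forall>v. d u v \<in> \<rat>) \<and> (\<forall>v\<in>E u. d u v > 0) \<and>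
              (\<forall>v. v \<notin> E u \<longrightarrow> d u v = 0) \<and> (\<Sum>v\<in>E u. d u v) = 1)"

definition is_play :: "('v \<Rightarrow> 'v set) \<Rightarrow> 'v stream \<Rightarrow> bool" where
  "is_play E \<rho> \<longleftrightarrow> (\<forall>i. \<rho> !! Suc i \<in> E (\<rho> !! i))"

definition strategies :: "'v set \<Rightarrow> ('v \<Rightarrow> 'v set) \<Rightarrow> ('v list \<Rightarrow> 'v) set" where
  "strategies Vi E = {\<sigma>. \<forall>h. h \<noteq> [] \<and> last h \<in> Vi \<longrightarrow> \<sigma> h \<in> E (last h)}"

definition trans_prob ::
  "'v set \<Rightarrow> 'v set \<Rightarrow> ('v \<Rightarrow> 'v \<Rightarrow> real) \<Rightarrow> ('v list \<Rightarrow> 'v) \<Rightarrow> ('v list \<Rightarrow> 'v) \<Rightarrow> 'v list \<Rightarrow> 'v \<Rightarrow> real" where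
  "trans_prob V1 V2 d \<sigma>1 \<sigma>2 h v' =
     (if last h \<in> V1 then (if v' = \<sigma>1 h then 1 else 0)
      else if last h \<in> V2 then (if v' = \<sigma>2 h then 1 else 0)
      else d (last h) v')"

definition prefix_prob ::
  "'v set \<Rightarrow> 'v set \<Rightarrow> ('v \<Rightarrow> 'v \<Rightarrow> real) \<Rightarrow> ('v list \<Rightarrow> 'v) \<Rightarrow> ('v list \<Rightarrow> 'v) \<Rightarrow> 'v \<Rightarrow> 'v list \<Rightarrow> real" where
  "prefix_prob V1 V2 d \<sigma>1 \<sigma>2 v xs =
     (if xs = [] then 1 else if hd xs \<noteq> v then 0
      else (\<Prod>k\<in>{1..<length xs}. trans_prob V1 V2 d \<sigma>1 \<sigma>2 (take k xs) (xs ! k)))"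

definition play_measure ::
  "'v set \<Rightarrow> 'v set \<Rightarrow> ('v \<Rightarrow> 'v \<Rightarrow> real) \<Rightarrow> ('v list \<Rightarrow> 'v) \<Rightarrow> ('v list \<Rightarrow> 'v) \<Rightarrow> 'v \<Rightarrow> 'v stream measure" where
  "play_measure V1 V2 d \<sigma>1 \<sigma>2 v =
     (SOME M. sets M = sets (stream_space (count_space UNIV)) \<and> prob_space M \<and>
        (\<forall>xs. measure M {\<omega> \<in> space M. stake (length xs) \<omega> = xs} = prefix_prob V1 V2 d \<sigma>1 \<sigma>2 v xs))"

definition expected_payoff ::
  "'v set \<Rightarrow> 'v set \<Rightarrow> ('v \<Rightarrow> 'v \<Rightarrow> real) \<Rightarrow> ('v stream \<Rightarrow> real) \<Rightarrow> ('v list \<Rightarrow> 'v) \<Rightarrow> ('v list \<Rightarrow> 'v) \<Rightarrow> 'v \<Rightarrow> real" where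
  "expected_payoff V1 V2 d \<phi> \<sigma>1 \<sigma>2 v = integral\<^sup>L (play_measure V1 V2 d \<sigma>1 \<sigma>2 v) \<phi>"

definition game_value ::
  "'v set \<Rightarrow> 'v set \<Rightarrow> ('v \<Rightarrow> 'v set) \<Rightarrow> ('v \<Rightarrow> 'v \<Rightarrow> real) \<Rightarrow> ('v stream \<Rightarrow> real) \<Rightarrow> 'v \<Rightarrow> real" where
  "game_value V1 V2 E d \<phi> v =
     (SUP \<sigma>1\<in>strategies V1 E. INF \<sigma>2\<in>strategies V2 E. expected_payoff V1 V2 d \<phi> \<sigma>1 \<sigma>2 v)"

definition bounded_objective :: "('v \<Rightarrow> 'v set) \<Rightarrow> ('v stream \<Rightarrow> real) \<Rightarrow> bool" where
  "bounded_objective E \<phi> \<longleftrightarrow> (\<exists>W::int. \<forall>\<rho>. is_play E \<rho> \<longrightarrow> \<bar>\<phi> \<rho>\<bar> \<le> of_int W)"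

definition prefix_independent :: "('v \<Rightarrow> 'v set) \<Rightarrow> ('v stream \<Rightarrow> real) \<Rightarrow> bool" where
  "prefix_independent E \<phi> \<longleftrightarrow>
     (\<forall>\<rho> \<rho>' i j. is_play E \<rho> \<and> is_play E \<rho>' \<and> sdrop i \<rho> = sdrop j \<rho>' \<longrightarrow> \<phi> \<rho> = \<phi> \<rho>')"

definition val_class :: "('v \<Rightarrow> real) \<Rightarrow> 'v \<Rightarrow> 'v set" where
  "val_class r v = {u. r u = r v}"

definition is_boundary :: "'v set \<Rightarrow> ('v \<Rightarrow> 'v set) \<Rightarrow> ('v \<Rightarrow> real) \<Rightarrow> 'v \<Rightarrow> bool" where
  "is_boundary Vp E r v \<longleftrightarrow> v \<in> Vp \<and> \<not> E v \<subseteq> val_class r v"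

definition boundary_values :: "'v set \<Rightarrow> ('v \<Rightarrow> 'v set) \<Rightarrow> ('v \<Rightarrow> real) \<Rightarrow> real list" where
  "boundary_values Vp E r = sorted_list_of_set {r v | v. is_boundary Vp E r v}"

end

theory Submission
  imports Defs "Jordan_Normal_Form.Determinant"
begin


primcorec G :: "('a list \<Rightarrow> 'b \<Rightarrow> 'a) \<Rightarrow> 'a list \<Rightarrow> 'b stream \<Rightarrow> 'a stream" where
  "G nx h \<omega> = nx h (shd \<omega>) ## G nx (h @ [nx h (shd \<omega>)]) (stl \<omega>)"

lemma stake_SucC: "stake (Suc n) (x ## s) = x # stake n s" by (simp)

lemma G_Cons: "G nx h (t ## \<omega>) = nx h t ## G nx (h @ [nx h t]) \<omega>"
  by (subst G.code) (simp)

lemma G_stake_dep: "stake n \<omega> = stake n \<omega>' \<Longrightarrow> stake n (G nx h \<omega>) = stake n (G nx h \<omega>')"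
proof (induction n arbitrary: h \<omega> \<omega>')
  case 0 then show ?case by (simp)
next
  case (Suc n)
  obtain t s where \<omega>: "\<omega> = t ## s" by (cases \<omega>)
  obtain t' s' where \<omega>': "\<omega>' = t' ## s'" by (cases \<omega>')
  from Suc.prems have "t # stake n s = t' # stake n s'" by (simp only: \<omega> \<omega>' stake_SucC)
  then have "t = t'" "stake n s = stake n s'" by (simp_all only: list.inject)
  note eq = this
  have 1: "stake (Suc n) (G nx h \<omega>) = nx h t # stake n (G nx (h@[nx h t]) s)"
    by (simp only: \<omega> G_Cons stake_SucC)
  have 2: "stake (Suc n) (G nx h \<omega>') = nx h t' # stake n (G nx (h@[nx h t']) s')"
    by (simp only: \<omega>' G_Cons stake_SucC)
  show ?case unfolding 1 2 eq(1) using Suc.IH[OF eq(2)] by (simp only:)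
qed

lemma G_stake_eq: "stake n (G nx h \<omega>) = stake n (G nx h (stake n \<omega> @- sconst c))"
  by (rule G_stake_dep) (simp add: stake_shift)

lemma measurable_G_stake:
  "(\<lambda>\<omega>. stake n (G nx h \<omega>)) \<in> measurable (stream_space (count_space (UNIV::'b::countable set))) (count_space UNIV)"
proof -
  have "(\<lambda>\<omega>. stake n (G nx h \<omega>)) = (\<lambda>l. stake n (G nx h (l @- sconst undefined))) o stake n"
    by (rule ext) (simp only: o_def, rule G_stake_eq)
  also have "\<dots> \<in> measurable (stream_space (count_space (UNIV::'b::countable set))) (count_space UNIV)"
    by (rule measurable_comp[OF measurable_stake]) (simp)
  finally show ?thesis .
qed

lemma measurable_G:
  "G nx h \<in> measurable (stream_space (count_space (UNIV::'b::countable set))) (stream_space (count_space UNIV))"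
proof (rule measurable_stream_space2)
  fix n
  have "(\<lambda>x. G nx h x !! n) = (\<lambda>l. l ! n) o (\<lambda>\<omega>. stake (Suc n) (G nx h \<omega>))"
    by (rule ext) (simp only: stake_nth lessI o_def)
  also have "\<dots> \<in> measurable (stream_space (count_space (UNIV::'b::countable set))) (count_space UNIV)"
    by (rule measurable_comp[OF measurable_G_stake]) (simp)
  finally show "(\<lambda>x. G nx h x !! n) \<in> measurable (stream_space (count_space (UNIV::'b::countable set))) (count_space UNIV)" .
qed

lemma sets_SB: "sets (stream_space (measure_pmf P)) = sets (stream_space (count_space UNIV))"
  by (rule sets_stream_space_cong) (simp)

lemma G_cyl:
  fixes P :: "'b::countable pmf"
  shows "emeasure (stream_space (measure_pmf P)) {\<omega> \<in> space (stream_space (measure_pmf P)). stake (length ys) (G nx h \<omega>) = ys}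
     = ennreal (\<Prod>k<length ys. pmf (map_pmf (nx (h @ take k ys)) P) (ys ! k))"
proof (induction ys arbitrary: h)
  case Nil
  interpret S: prob_space "stream_space (measure_pmf P)"
    by (rule prob_space.prob_space_stream_space) (rule prob_space_measure_pmf)
  show ?case by (simp add: S.emeasure_space_1)
next
  case (Cons y ys)
  let ?SB = "stream_space (measure_pmf P)"
  have meas: "(\<lambda>\<omega>. stake n (G nx h' \<omega>)) \<in> measurable ?SB (count_space UNIV)" for n h'
    using measurable_G_stake measurable_cong_sets[OF sets_SB refl] by (blast)
  have X: "{\<omega> \<in> space ?SB. stake (length (y#ys)) (G nx h \<omega>) = y#ys} \<in> sets ?SB"
    using meas by (measurable)
  have sp: "space ?SB = UNIV" by (simp add: space_stream_space)
  have "emeasure ?SB {\<omega> \<in> space ?SB. stake (length (y#ys)) (G nx h \<omega>) = y#ys}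
     = (\<integral>\<^sup>+t. emeasure ?SB {x \<in> space ?SB. t ## x \<in> {\<omega> \<in> space ?SB. stake (length (y#ys)) (G nx h \<omega>) = y#ys}} \<partial>measure_pmf P)"
    by (rule prob_space.emeasure_stream_space[OF prob_space_measure_pmf X])
  also have "\<dots> = (\<integral>\<^sup>+t. ennreal (\<Prod>k<length ys. pmf (map_pmf (nx ((h @ [y]) @ take k ys)) P) (ys ! k)) * indicator {t. nx h t = y} t \<partial>measure_pmf P)"
  proof (rule nn_integral_cong)
    fix t
    show "emeasure ?SB {x \<in> space ?SB. t ## x \<in> {\<omega> \<in> space ?SB. stake (length (y#ys)) (G nx h \<omega>) = y#ys}}
      = ennreal (\<Prod>k<length ys. pmf (map_pmf (nx ((h @ [y]) @ take k ys)) P) (ys ! k)) * indicator {t. nx h t = y} t"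
    proof (cases "nx h t = y")
      case True
      then have "{x \<in> space ?SB. t ## x \<in> {\<omega> \<in> space ?SB. stake (length (y#ys)) (G nx h \<omega>) = y#ys}}
         = {\<omega> \<in> space ?SB. stake (length ys) (G nx (h @ [y]) \<omega>) = ys}"
        unfolding sp using True by (simp only: G_Cons length_Cons stake_SucC stream.sel list.inject simp_thms mem_Collect_eq UNIV_I)
      then show ?thesis using Cons.IH[of "h @ [y]"] True by (simp)
    next
      case False
      then have "{x \<in> space ?SB. t ## x \<in> {\<omega> \<in> space ?SB. stake (length (y#ys)) (G nx h \<omega>) = y#ys}} = {}"
        unfolding sp using False by (simp only: G_Cons length_Cons stake_SucC stream.sel list.inject simp_thms mem_Collect_eq UNIV_I Collect_empty_eq)
      then show ?thesis using False by (simp)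
    qed
  qed
  also have "\<dots> = ennreal (\<Prod>k<length ys. pmf (map_pmf (nx ((h @ [y]) @ take k ys)) P) (ys ! k)) * emeasure (measure_pmf P) {t. nx h t = y}"
    by (rule nn_integral_cmult_indicator, simp)
  also have "emeasure (measure_pmf P) {t. nx h t = y} = ennreal (pmf (map_pmf (nx h) P) y)"
    by (simp add: pmf_map measure_pmf.emeasure_eq_measure vimage_def)
  also have "ennreal (\<Prod>k<length ys. pmf (map_pmf (nx ((h @ [y]) @ take k ys)) P) (ys ! k)) * ennreal (pmf (map_pmf (nx h) P) y) = ennreal ((\<Prod>k<length ys. pmf (map_pmf (nx ((h @ [y]) @ take k ys)) P) (ys ! k)) * pmf (map_pmf (nx h) P) y)"
    by (rule ennreal_mult''[symmetric], simp)
  also have "(\<Prod>k<length ys. pmf (map_pmf (nx ((h @ [y]) @ take k ys)) P) (ys ! k)) * pmf (map_pmf (nx h) P) y = pmf (map_pmf (nx h) P) y * (\<Prod>k<length ys. pmf (map_pmf (nx ((h @ [y]) @ take k ys)) P) (ys ! k))"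
    by (rule mult.commute)
  also have "pmf (map_pmf (nx h) P) y * (\<Prod>k<length ys. pmf (map_pmf (nx ((h @ [y]) @ take k ys)) P) (ys ! k))
      = (\<Prod>k<length (y#ys). pmf (map_pmf (nx (h @ take k (y#ys))) P) ((y#ys) ! k))"
    by (simp only: length_Cons prod.lessThan_Suc_shift take_0 append_Nil2 nth_Cons_0 take_Suc_Cons nth_Cons_Suc append_assoc append_Cons append_Nil)
  finally show ?case .
qed


locale sg =
  fixes V1 V2 Vp :: "'v::finite set" and E :: "'v \<Rightarrow> 'v set" and d :: "'v \<Rightarrow> 'v \<Rightarrow> real"
  assumes game: "stochastic_game V1 V2 Vp E d"
begin

lemma E_ne: "E v \<noteq> {}" using game by (simp add: stochastic_game_def)
lemma cover: "v \<in> V1 \<or> v \<in> V2 \<or> v \<in> Vp" using game unfolding stochastic_game_def by (blast)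
lemma disj12: "v \<in> V1 \<Longrightarrow> v \<notin> V2" using game unfolding stochastic_game_def by (blast)
lemma disj1p: "v \<in> V1 \<Longrightarrow> v \<notin> Vp" using game unfolding stochastic_game_def by (blast)
lemma disj2p: "v \<in> V2 \<Longrightarrow> v \<notin> Vp" using game unfolding stochastic_game_def by (blast)
lemma d_pos: "u \<in> Vp \<Longrightarrow> v \<in> E u \<Longrightarrow> d u v > 0" using game unfolding stochastic_game_def by (blast)
lemma d_zero: "u \<in> Vp \<Longrightarrow> v \<notin> E u \<Longrightarrow> d u v = 0" using game unfolding stochastic_game_def by (blast)
lemma d_sum: "u \<in> Vp \<Longrightarrow> sum (d u) (E u) = 1" using game unfolding stochastic_game_def by (blast)
lemma d_nonneg: "u \<in> Vp \<Longrightarrow> d u v \<ge> 0"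
  using d_pos[of u v] d_zero[of u v] by (cases "v \<in> E u") (auto)+
lemma d_sum_UNIV: "u \<in> Vp \<Longrightarrow> sum (d u) UNIV = 1"
proof -
  assume u: "u \<in> Vp"
  have "sum (d u) UNIV = sum (d u) (E u)"
    by (rule sum.mono_neutral_right) (auto simp: d_zero[OF u])+
  then show ?thesis using d_sum[OF u] by (simp)
qed

definition D :: "'v \<Rightarrow> 'v pmf" where
  "D w = (if w \<in> Vp then embed_pmf (d w) else return_pmf w)"

lemma pmf_D: assumes w: "w \<in> Vp" shows "pmf (D w) x = d w x"
proof -
  have nn: "\<And>x. 0 \<le> d w x" using d_nonneg[OF w] .
  have pr: "(\<integral>\<^sup>+x. ennreal (d w x) \<partial>count_space UNIV) = 1"
  proof -
    have "(\<Sum>a\<in>UNIV. ennreal (d w a)) = ennreal (sum (d w) UNIV)"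
      by (rule sum_ennreal) (simp add: nn)
    then show ?thesis using d_sum_UNIV[OF w] by (simp add: nn_integral_count_space_finite)
  qed
  show ?thesis unfolding D_def using w pmf_embed_pmf[OF nn pr] by (simp)
qed

definition PP :: "('v \<Rightarrow> 'v) pmf" where "PP = Pi_pmf UNIV undefined D"

lemma PP_comp: "map_pmf (\<lambda>f. f w) PP = D w"
  unfolding PP_def by (simp add: Pi_pmf_component)

definition nxt :: "('v list \<Rightarrow> 'v) \<Rightarrow> ('v list \<Rightarrow> 'v) \<Rightarrow> 'v list \<Rightarrow> ('v \<Rightarrow> 'v) \<Rightarrow> 'v" where
  "nxt \<sigma>1 \<sigma>2 h f = (if last h \<in> V1 then \<sigma>1 h else if last h \<in> V2 then \<sigma>2 h else f (last h))"

lemma pmf_nxt: "pmf (map_pmf (nxt \<sigma>1 \<sigma>2 h) PP) y = trans_prob V1 V2 d \<sigma>1 \<sigma>2 h y"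
proof (cases "last h \<in> V1")
  case True
  then have "nxt \<sigma>1 \<sigma>2 h = (\<lambda>_. \<sigma>1 h)" by (simp add: nxt_def fun_eq_iff)
  then show ?thesis using True by (simp add: trans_prob_def indicator_def)
next
  case F1: False
  show ?thesis
  proof (cases "last h \<in> V2")
    case True
    then have "nxt \<sigma>1 \<sigma>2 h = (\<lambda>_. \<sigma>2 h)" using F1 by (simp add: nxt_def fun_eq_iff)
    then show ?thesis using True F1 by (simp add: trans_prob_def indicator_def)
  next
    case False
    then have p: "last h \<in> Vp" using F1 cover by (blast)
    have "nxt \<sigma>1 \<sigma>2 h = (\<lambda>f. f (last h))" using F1 False by (simp add: nxt_def fun_eq_iff)
    then show ?thesis using False F1 p by (simp add: trans_prob_def PP_comp pmf_D)
  qed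
qed

lemma prefix_prob_Cons:
  "prefix_prob V1 V2 d \<sigma>1 \<sigma>2 v (v # ys) = (\<Prod>k<length ys. trans_prob V1 V2 d \<sigma>1 \<sigma>2 ([v] @ take k ys) (ys ! k))"
proof -
  have "prefix_prob V1 V2 d \<sigma>1 \<sigma>2 v (v # ys) = (\<Prod>k\<in>{Suc 0..<Suc (length ys)}. trans_prob V1 V2 d \<sigma>1 \<sigma>2 (take k (v#ys)) ((v#ys) ! k))"
    by (simp add: prefix_prob_def)
  also have "\<dots> = (\<Prod>k\<in>{0..<length ys}. trans_prob V1 V2 d \<sigma>1 \<sigma>2 (take (Suc k) (v#ys)) ((v#ys) ! Suc k))"
    by (rule prod.shift_bounds_Suc_ivl)
  also have "\<dots> = (\<Prod>k<length ys. trans_prob V1 V2 d \<sigma>1 \<sigma>2 ([v] @ take k ys) (ys ! k))"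
    by (simp add: atLeast0LessThan)
  finally show ?thesis .
qed

abbreviation "S \<equiv> stream_space (count_space (UNIV :: 'v set))"

lemma spS: "space S = UNIV" by (simp add: space_stream_space)

lemma cyl_sets: "{\<omega>. stake n \<omega> = xs} \<in> sets S"
proof -
  have "{\<omega> \<in> space S. stake n \<omega> = xs} \<in> sets S" by (measurable)
  then show ?thesis by (simp add: spS)
qed

lemma exists_measure:
  "\<exists>M. sets M = sets S \<and> prob_space M \<and>
     (\<forall>xs. measure M {\<omega> \<in> space M. stake (length xs) \<omega> = xs} = prefix_prob V1 V2 d \<sigma>1 \<sigma>2 v xs)"
proof -
  let ?SB = "stream_space (measure_pmf PP)"
  let ?f = "\<lambda>\<omega>. v ## G (nxt \<sigma>1 \<sigma>2) [v] \<omega>"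
  have mG: "G (nxt \<sigma>1 \<sigma>2) [v] \<in> measurable ?SB S"
    using measurable_G measurable_cong_sets[OF sets_SB refl] by (blast)
  have mf: "?f \<in> measurable ?SB S"
    by (rule measurable_Stream[OF measurable_const mG], simp)
  define M where "M = distr ?SB S ?f"
  interpret SB: prob_space ?SB
    by (rule prob_space.prob_space_stream_space, rule prob_space_measure_pmf)
  have sM: "sets M = sets S" unfolding M_def by (simp)
  have pM: "prob_space M" unfolding M_def by (rule SB.prob_space_distr[OF mf])
  have spM: "space M = UNIV" unfolding M_def by (simp add: space_stream_space)
  have spSB: "space ?SB = UNIV" by (simp add: space_stream_space)
  have "measure M {\<omega> \<in> space M. stake (length xs) \<omega> = xs} = prefix_prob V1 V2 d \<sigma>1 \<sigma>2 v xs" for xs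
  proof -
    have cyl: "{\<omega> \<in> space M. stake (length xs) \<omega> = xs} \<in> sets S"
      unfolding spM using cyl_sets by (simp)
    have md: "measure M {\<omega> \<in> space M. stake (length xs) \<omega> = xs} = measure ?SB (?f -` {\<omega> \<in> space M. stake (length xs) \<omega> = xs} \<inter> space ?SB)"
      using measure_distr[OF mf cyl[unfolded M_def]] unfolding M_def .
    show ?thesis
    proof (cases xs)
      case Nil
      then show ?thesis using md SB.prob_space by (simp add: spSB spM prefix_prob_def)
    next
      case (Cons x ys)
      show ?thesis
      proof (cases "x = v")
        case False
        then have "?f -` {\<omega> \<in> space M. stake (length xs) \<omega> = xs} \<inter> space ?SB = {}"
          using Cons by (auto)
        then show ?thesis using md Cons False by (simp add: prefix_prob_def)
      next
        case True
        then have pre: "?f -` {\<omega> \<in> space M. stake (length xs) \<omega> = xs} \<inter> space ?SB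
            = {\<omega> \<in> space ?SB. stake (length ys) (G (nxt \<sigma>1 \<sigma>2) [v] \<omega>) = ys}"
          using Cons by (auto simp: spSB spM)
        have "ennreal (measure ?SB {\<omega> \<in> space ?SB. stake (length ys) (G (nxt \<sigma>1 \<sigma>2) [v] \<omega>) = ys})
            = ennreal (\<Prod>k<length ys. pmf (map_pmf (nxt \<sigma>1 \<sigma>2 ([v] @ take k ys)) PP) (ys ! k))"
          using G_cyl[of PP ys "nxt \<sigma>1 \<sigma>2" "[v]"] by (simp add: SB.emeasure_eq_measure)
        then have "measure ?SB {\<omega> \<in> space ?SB. stake (length ys) (G (nxt \<sigma>1 \<sigma>2) [v] \<omega>) = ys}
            = (\<Prod>k<length ys. pmf (map_pmf (nxt \<sigma>1 \<sigma>2 ([v] @ take k ys)) PP) (ys ! k))"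
          by (simp add: prod_nonneg)
        then show ?thesis using md pre Cons True by (simp add: prefix_prob_Cons[simplified] pmf_nxt)
      qed
    qed
  qed
  then show ?thesis using sM pM by (blast)
qed

abbreviation PM where "PM \<sigma>1 \<sigma>2 v \<equiv> play_measure V1 V2 d \<sigma>1 \<sigma>2 v"

lemma PM_props: "sets (PM \<sigma>1 \<sigma>2 v) = sets S \<and> prob_space (PM \<sigma>1 \<sigma>2 v) \<and>
     (\<forall>xs. measure (PM \<sigma>1 \<sigma>2 v) {\<omega> \<in> space (PM \<sigma>1 \<sigma>2 v). stake (length xs) \<omega> = xs} = prefix_prob V1 V2 d \<sigma>1 \<sigma>2 v xs)"
  unfolding play_measure_def by (rule someI_ex[OF exists_measure])

lemma PM_sets: "sets (PM \<sigma>1 \<sigma>2 v) = sets S" using PM_props by blast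
lemma PM_prob: "prob_space (PM \<sigma>1 \<sigma>2 v)" using PM_props by blast
lemma PM_space: "space (PM \<sigma>1 \<sigma>2 v) = UNIV"
  using sets_eq_imp_space_eq[OF PM_sets] spS by simp
lemma PM_cyl: "measure (PM \<sigma>1 \<sigma>2 v) {\<omega>. stake (length xs) \<omega> = xs} = prefix_prob V1 V2 d \<sigma>1 \<sigma>2 v xs"
  using PM_props[of \<sigma>1 \<sigma>2 v] by (simp add: PM_space)
lemma PM_meas_cong[measurable_cong]: "sets (PM \<sigma>1 \<sigma>2 v) = sets S" by (rule PM_sets)

lemma sstart_UNIV: "sstart UNIV xs = {\<omega>. stake (length xs) \<omega> = xs}"
proof -
  have "stake (length xs) \<omega> = xs \<longleftrightarrow> (\<forall>i<length xs. \<omega> !! i = xs ! i)" for \<omega>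
    by (auto simp: list_eq_iff_nth_eq)
  then show ?thesis using sstart_eq[of _ UNIV xs] by (auto)
qed

lemma PM_unique:
  assumes N: "prob_space N" "sets N = sets S"
    and cyl: "\<And>xs. xs \<noteq> [] \<Longrightarrow> measure N {\<omega>. stake (length xs) \<omega> = xs} = prefix_prob V1 V2 d \<sigma>1 \<sigma>2 v xs"
  shows "N = PM \<sigma>1 \<sigma>2 v"
proof (rule stream_space_eq_sstart[of UNIV])
  show "countable (UNIV :: 'v set)" by (rule countable_finite, simp)
  show "prob_space N" "prob_space (PM \<sigma>1 \<sigma>2 v)" by (rule N) (rule PM_prob)
  show "AE x in N. x \<in> streams UNIV" "AE x in PM \<sigma>1 \<sigma>2 v. x \<in> streams UNIV" by (simp)+
  show "sets N = sets S" "sets (PM \<sigma>1 \<sigma>2 v) = sets S" by (rule N) (rule PM_sets)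
  fix xs :: "'v list" assume "xs \<noteq> []"
  interpret N: prob_space N by (rule N)
  interpret P: prob_space "PM \<sigma>1 \<sigma>2 v" by (rule PM_prob)
  show "emeasure N (sstart UNIV xs) = emeasure (PM \<sigma>1 \<sigma>2 v) (sstart UNIV xs)"
    unfolding sstart_UNIV N.emeasure_eq_measure P.emeasure_eq_measure
    using cyl[OF \<open>xs \<noteq> []\<close>] PM_cyl by (simp)
qed

lemma PM_AE_not_cyl:
  assumes "prefix_prob V1 V2 d \<sigma>1 \<sigma>2 v xs = 0"
  shows "AE \<omega> in PM \<sigma>1 \<sigma>2 v. stake (length xs) \<omega> \<noteq> xs"
proof -
  interpret P: prob_space "PM \<sigma>1 \<sigma>2 v" by (rule PM_prob)
  have s: "{\<omega>. stake (length xs) \<omega> = xs} \<in> sets (PM \<sigma>1 \<sigma>2 v)" using cyl_sets PM_sets by (blast)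
  show ?thesis
    by (subst AE_iff_measurable[OF s]) (auto simp: PM_space P.emeasure_eq_measure PM_cyl assms)+
qed

lemma prefix_prob_bad:
  assumes s1: "\<sigma>1 \<in> strategies V1 E" and s2: "\<sigma>2 \<in> strategies V2 E"
    and len: "Suc i < length xs" and bad: "xs ! Suc i \<notin> E (xs ! i)"
  shows "prefix_prob V1 V2 d \<sigma>1 \<sigma>2 v xs = 0"
proof (cases "hd xs = v")
  case False
  have "xs \<noteq> []" using len by (metis less_nat_zero_code list.size(3))
  then show ?thesis using False by (simp add: prefix_prob_def)
next
  case True
  have lt: "last (take (Suc i) xs) = xs ! i" using len by (simp add: take_Suc_conv_app_nth)
  have ne0: "xs \<noteq> []" using len by (metis less_nat_zero_code list.size(3))
  have ne: "take (Suc i) xs \<noteq> []" using ne0 by (simp)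
  have z: "trans_prob V1 V2 d \<sigma>1 \<sigma>2 (take (Suc i) xs) (xs ! Suc i) = 0"
  proof -
    consider "xs ! i \<in> V1" | "xs ! i \<in> V2" "xs ! i \<notin> V1" | "xs ! i \<in> Vp" "xs ! i \<notin> V1" "xs ! i \<notin> V2"
      using cover by (blast)
    then show ?thesis
    proof cases
      case 1
      from s1 have "\<forall>h. h \<noteq> [] \<and> last h \<in> V1 \<longrightarrow> \<sigma>1 h \<in> E (last h)" by (simp add: strategies_def)
      then have "\<sigma>1 (take (Suc i) xs) \<in> E (last (take (Suc i) xs))" using ne lt 1 by (metis)
      then have "\<sigma>1 (take (Suc i) xs) \<in> E (xs ! i)" unfolding lt .
      then show ?thesis using 1 bad lt by (auto simp: trans_prob_def)
    next
      case 2
      from s2 have "\<forall>h. h \<noteq> [] \<and> last h \<in> V2 \<longrightarrow> \<sigma>2 h \<in> E (last h)" by (simp add: strategies_def)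
      then have "\<sigma>2 (take (Suc i) xs) \<in> E (last (take (Suc i) xs))" using ne lt 2 by (metis)
      then have "\<sigma>2 (take (Suc i) xs) \<in> E (xs ! i)" unfolding lt .
      then show ?thesis using 2 bad lt by (auto simp: trans_prob_def)
    next
      case 3
      then show ?thesis using bad lt d_zero by (auto simp: trans_prob_def)
    qed
  qed
  have "(\<Prod>k\<in>{1..<length xs}. trans_prob V1 V2 d \<sigma>1 \<sigma>2 (take k xs) (xs ! k)) = 0"
    by (rule prod_zero) (use len z in \<open>auto intro!: bexI[of _ "Suc i"]\<close>)
  then show ?thesis using True len by (auto simp: prefix_prob_def)
qed

lemma PM_AE_play:
  assumes s1: "\<sigma>1 \<in> strategies V1 E" and s2: "\<sigma>2 \<in> strategies V2 E"
  shows "AE \<omega> in PM \<sigma>1 \<sigma>2 v. is_play E \<omega>"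
proof -
  have "AE \<omega> in PM \<sigma>1 \<sigma>2 v. \<omega> !! Suc i \<in> E (\<omega> !! i)" for i
  proof -
    let ?B = "{xs :: 'v list. set xs \<subseteq> UNIV \<and> length xs = Suc (Suc i)}"
    have fin: "finite ?B" by (rule finite_lists_length_eq, simp)
    have "AE \<omega> in PM \<sigma>1 \<sigma>2 v. \<forall>xs\<in>?B. xs ! Suc i \<notin> E (xs ! i) \<longrightarrow> stake (length xs) \<omega> \<noteq> xs"
    proof (rule AE_finite_allI[OF fin])
      fix xs assume "xs \<in> ?B"
      then have len: "Suc i < length xs" by (simp)
      show "AE \<omega> in PM \<sigma>1 \<sigma>2 v. xs ! Suc i \<notin> E (xs ! i) \<longrightarrow> stake (length xs) \<omega> \<noteq> xs"
      proof (cases "xs ! Suc i \<in> E (xs ! i)")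
        case True then show ?thesis by (simp)
      next
        case False
        then show ?thesis using PM_AE_not_cyl[OF prefix_prob_bad[OF s1 s2 len False]] by (simp)
      qed
    qed
    then show ?thesis
    proof (rule AE_mp, intro AE_I2 impI)
      fix \<omega> assume H: "\<forall>xs\<in>?B. xs ! Suc i \<notin> E (xs ! i) \<longrightarrow> stake (length xs) \<omega> \<noteq> xs"
      have mem: "stake (Suc (Suc i)) \<omega> \<in> ?B" by (simp)
      have "stake (Suc (Suc i)) \<omega> ! Suc i \<notin> E (stake (Suc (Suc i)) \<omega> ! i) \<longrightarrow> stake (length (stake (Suc (Suc i)) \<omega>)) \<omega> \<noteq> stake (Suc (Suc i)) \<omega>"
        using H mem by (blast)
      then have "stake (Suc (Suc i)) \<omega> ! Suc i \<in> E (stake (Suc (Suc i)) \<omega> ! i)" unfolding length_stake by (blast)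
      then show "\<omega> !! Suc i \<in> E (\<omega> !! i)" by (simp only: stake_nth lessI less_SucI)
    qed
  qed
  then have "AE \<omega> in PM \<sigma>1 \<sigma>2 v. \<forall>i. \<omega> !! Suc i \<in> E (\<omega> !! i)" by (simp add: AE_all_countable)
  then show ?thesis unfolding is_play_def .
qed

lemma PM_AE_start: "AE \<omega> in PM \<sigma>1 \<sigma>2 v. shd \<omega> = v"
proof -
  have "AE \<omega> in PM \<sigma>1 \<sigma>2 v. \<forall>w\<in>UNIV - {v}. stake (length [w]) \<omega> \<noteq> [w]"
    by (rule AE_finite_allI, simp) (rule PM_AE_not_cyl, simp add: prefix_prob_def)
  then show ?thesis by (rule AE_mp) (auto intro!: AE_I2)
qed

end

lemma emeasure_K0:
  assumes c: "c > 0" and A: "A \<in> sets M" and B: "B \<in> sets M" and fm: "finite_measure M"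
  shows "emeasure (density M (\<lambda>x. ennreal (indicator A x / c))) B = ennreal (measure M (A \<inter> B) / c)"
proof -
  note A[measurable] B[measurable]
  have "emeasure (density M (\<lambda>x. ennreal (indicator A x / c))) B = (\<integral>\<^sup>+x. ennreal (indicator A x / c) * indicator B x \<partial>M)"
    by (rule emeasure_density) (measurable, measurable)
  also have "\<dots> = (\<integral>\<^sup>+x. ennreal (1 / c) * indicator (A \<inter> B) x \<partial>M)"
    by (rule nn_integral_cong, simp split: split_indicator)
  also have "\<dots> = ennreal (1 / c) * emeasure M (A \<inter> B)"
    by (rule nn_integral_cmult_indicator) (use A B in \<open>auto\<close>)
  also have "emeasure M (A \<inter> B) = ennreal (measure M (A \<inter> B))"
    using fm by (simp add: finite_measure.emeasure_eq_measure)
  also have "ennreal (1 / c) * ennreal (measure M (A \<inter> B)) = ennreal (measure M (A \<inter> B) / c)"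
    using c by (simp add: ennreal_mult''[symmetric])
  finally show ?thesis .
qed

context sg begin

lemma trans_prob_shift:
  "h \<noteq> [] \<Longrightarrow> trans_prob V1 V2 d \<sigma>1 \<sigma>2 (u # h) y = trans_prob V1 V2 d (\<lambda>h. \<sigma>1 (u#h)) (\<lambda>h. \<sigma>2 (u#h)) h y"
  by (simp add: trans_prob_def)

lemma prefix_prob_shift:
  assumes u: "u \<in> Vp"
  shows "prefix_prob V1 V2 d \<sigma>1 \<sigma>2 u (u # v # ys) = d u v * prefix_prob V1 V2 d (\<lambda>h. \<sigma>1 (u#h)) (\<lambda>h. \<sigma>2 (u#h)) v (v # ys)"
proof -
  have t0: "trans_prob V1 V2 d \<sigma>1 \<sigma>2 [u] v = d u v"
    using u disj1p disj2p by (auto simp: trans_prob_def)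
  have "prefix_prob V1 V2 d \<sigma>1 \<sigma>2 u (u # v # ys) = (\<Prod>k<Suc (length ys). trans_prob V1 V2 d \<sigma>1 \<sigma>2 ([u] @ take k (v # ys)) ((v # ys) ! k))"
    by (simp only: prefix_prob_Cons length_Cons)
  also have "\<dots> = trans_prob V1 V2 d \<sigma>1 \<sigma>2 [u] v * (\<Prod>k<length ys. trans_prob V1 V2 d \<sigma>1 \<sigma>2 (u # (v # take k ys)) (ys ! k))"
    by (simp only: prod.lessThan_Suc_shift take_0 append_Nil2 nth_Cons_0 take_Suc_Cons nth_Cons_Suc append_Cons append_Nil)
  also have "(\<Prod>k<length ys. trans_prob V1 V2 d \<sigma>1 \<sigma>2 (u # (v # take k ys)) (ys ! k))
     = (\<Prod>k<length ys. trans_prob V1 V2 d (\<lambda>h. \<sigma>1 (u#h)) (\<lambda>h. \<sigma>2 (u#h)) ([v] @ take k ys) (ys ! k))"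
    by (rule prod.cong[OF refl], subst trans_prob_shift, simp_all)
  also have "\<dots> = prefix_prob V1 V2 d (\<lambda>h. \<sigma>1 (u#h)) (\<lambda>h. \<sigma>2 (u#h)) v (v # ys)"
    by (simp only: prefix_prob_Cons)
  finally show ?thesis using t0 by (simp)
qed

lemma PM_measurable[measurable_cong]: "sets (PM \<sigma>1 \<sigma>2 v) = sets (stream_space (count_space UNIV))"
  by (rule PM_sets)

lemma A_sets: "{\<omega>::'v stream. \<omega> !! Suc 0 = w} \<in> sets S"
proof -
  have "{\<omega> \<in> space S. \<omega> !! Suc 0 = w} \<in> sets S" by (measurable)
  then show ?thesis by (simp add: spS)
qed

lemma stl_cyl_sets: "{\<omega>::'v stream. stake n (stl \<omega>) = xs} \<in> sets S"
proof -
  have "{\<omega> \<in> space S. stake n (stl \<omega>) = xs} \<in> sets S" by (measurable)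
  then show ?thesis by (simp add: spS)
qed

lemma shift_measure:
  assumes u: "u \<in> Vp" and v: "v \<in> E u"
  defines "A \<equiv> {\<omega>::'v stream. \<omega> !! Suc 0 = v}"
  shows "distr (density (PM \<sigma>1 \<sigma>2 u) (\<lambda>x. ennreal (indicator A x / d u v))) S stl
         = PM (\<lambda>h. \<sigma>1 (u#h)) (\<lambda>h. \<sigma>2 (u#h)) v"
    and "measure (PM \<sigma>1 \<sigma>2 u) A = d u v"
proof -
  let ?M = "PM \<sigma>1 \<sigma>2 u"
  let ?K0 = "density ?M (\<lambda>x. ennreal (indicator A x / d u v))"
  interpret M: prob_space ?M by (rule PM_prob)
  have c: "d u v > 0" using d_pos[OF u v] .
  have As: "A \<in> sets ?M" unfolding A_def using A_sets PM_sets by (blast)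
  have AEs: "AE \<omega> in ?M. shd \<omega> = u" by (rule PM_AE_start)
  have key: "measure ?M (A \<inter> {\<omega>. stake (length ys) (stl \<omega>) = ys}) = d u v * prefix_prob V1 V2 d (\<lambda>h. \<sigma>1 (u#h)) (\<lambda>h. \<sigma>2 (u#h)) v ys"
    for ys
  proof (cases ys)
    case Nil
    have "measure ?M (A \<inter> {\<omega>. stake (length ys) (stl \<omega>) = ys}) = measure ?M {\<omega>. stake (length [u, v]) \<omega> = [u, v]}"
    proof (rule measure_eq_AE)
      show "AE x in ?M. (x \<in> A \<inter> {\<omega>. stake (length ys) (stl \<omega>) = ys}) = (x \<in> {\<omega>. stake (length [u, v]) \<omega> = [u, v]})"
        using AEs by (rule AE_mp, intro AE_I2 impI, auto simp add: A_def Nil)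
      show "A \<inter> {\<omega>. stake (length ys) (stl \<omega>) = ys} \<in> sets ?M" using As stl_cyl_sets PM_sets by (blast)
      show "{\<omega>. stake (length [u, v]) \<omega> = [u, v]} \<in> sets ?M" using cyl_sets PM_sets by (blast)
    qed
    also have "\<dots> = d u v * prefix_prob V1 V2 d (\<lambda>h. \<sigma>1 (u#h)) (\<lambda>h. \<sigma>2 (u#h)) v [v]"
      by (simp only: PM_cyl prefix_prob_shift[OF u])
    also have "prefix_prob V1 V2 d (\<lambda>h. \<sigma>1 (u#h)) (\<lambda>h. \<sigma>2 (u#h)) v [v] = 1"
      by (simp add: prefix_prob_def)
    finally show ?thesis using Nil by (simp add: prefix_prob_def)
  next
    case (Cons x zs)
    show ?thesis
    proof (cases "x = v")
      case False
      then have "A \<inter> {\<omega>. stake (length ys) (stl \<omega>) = ys} = {}" using Cons by (auto simp: A_def)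
      then show ?thesis using Cons False by (simp add: prefix_prob_def)
    next
      case True
      have "measure ?M (A \<inter> {\<omega>. stake (length ys) (stl \<omega>) = ys}) = measure ?M {\<omega>. stake (length (u # v # zs)) \<omega> = u # v # zs}"
      proof (rule measure_eq_AE)
        show "AE x in ?M. (x \<in> A \<inter> {\<omega>. stake (length ys) (stl \<omega>) = ys}) = (x \<in> {\<omega>. stake (length (u # v # zs)) \<omega> = u # v # zs})"
          using AEs by (rule AE_mp, intro AE_I2 impI, auto simp add: A_def Cons True)
        show "A \<inter> {\<omega>. stake (length ys) (stl \<omega>) = ys} \<in> sets ?M" using As stl_cyl_sets PM_sets by (blast)
        show "{\<omega>. stake (length (u # v # zs)) \<omega> = u # v # zs} \<in> sets ?M" using cyl_sets PM_sets by (blast)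
      qed
      also have "\<dots> = d u v * prefix_prob V1 V2 d (\<lambda>h. \<sigma>1 (u#h)) (\<lambda>h. \<sigma>2 (u#h)) v ys"
        unfolding Cons True by (simp only: PM_cyl prefix_prob_shift[OF u])
      finally show ?thesis .
    qed
  qed
  have mA: "measure ?M A = d u v"
    using key[of "[]"] by (simp add: prefix_prob_def)
  then show "measure ?M A = d u v" .
  have K0e: "emeasure ?K0 B = ennreal (measure ?M (A \<inter> B) / d u v)" if "B \<in> sets ?M" for B
    by (rule emeasure_K0[OF c As that]) (rule M.finite_measure_axioms)
  have sK0: "sets ?K0 = sets S" by (simp add: PM_sets)
  have spK0: "space ?K0 = UNIV" by (simp add: PM_space)
  have K0p: "prob_space ?K0"
  proof (rule prob_spaceI)
    have "emeasure ?K0 (space ?K0) = ennreal (measure ?M (A \<inter> space ?K0) / d u v)"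
      by (rule K0e, metis sets.top PM_space spK0)
    also have "\<dots> = 1" using mA c by (simp add: spK0 PM_space)
    finally show "emeasure ?K0 (space ?K0) = 1" .
  qed
  have mstl: "stl \<in> measurable ?K0 S"
    using measurable_stl[of "count_space UNIV"] measurable_cong_sets[OF sK0 refl] by (blast)
  show "distr ?K0 S stl = PM (\<lambda>h. \<sigma>1 (u#h)) (\<lambda>h. \<sigma>2 (u#h)) v"
  proof (rule PM_unique)
    show "prob_space (distr ?K0 S stl)" by (rule prob_space.prob_space_distr[OF K0p mstl])
    show "sets (distr ?K0 S stl) = sets S" by (simp)
    fix xs :: "'v list"
    have "measure (distr ?K0 S stl) {\<omega>. stake (length xs) \<omega> = xs} = measure ?K0 (stl -` {\<omega>. stake (length xs) \<omega> = xs} \<inter> space ?K0)"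
      by (rule measure_distr[OF mstl cyl_sets])
    also have "stl -` {\<omega>. stake (length xs) \<omega> = xs} \<inter> space ?K0 = {\<omega>. stake (length xs) (stl \<omega>) = xs}"
      by (auto simp: spK0 PM_space)
    also have "measure ?K0 {\<omega>. stake (length xs) (stl \<omega>) = xs} = measure ?M (A \<inter> {\<omega>. stake (length xs) (stl \<omega>) = xs}) / d u v"
      using K0e[of "{\<omega>. stake (length xs) (stl \<omega>) = xs}"] stl_cyl_sets PM_sets c
      by (simp add: measure_def)
    also have "\<dots> = prefix_prob V1 V2 d (\<lambda>h. \<sigma>1 (u#h)) (\<lambda>h. \<sigma>2 (u#h)) v xs"
      using key[of xs] c by (simp)
    finally show "measure (distr ?K0 S stl) {\<omega>. stake (length xs) \<omega> = xs} = prefix_prob V1 V2 d (\<lambda>h. \<sigma>1 (u#h)) (\<lambda>h. \<sigma>2 (u#h)) v xs" .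
  qed
qed

lemma play_stl: "is_play E x \<Longrightarrow> is_play E (stl x)"
  unfolding is_play_def
proof (intro allI)
  fix i assume H: "\<forall>i. x !! Suc i \<in> E (x !! i)"
  show "stl x !! Suc i \<in> E (stl x !! i)" using H[rule_format, of "Suc i"] by (simp only: snth.simps(2))
qed

lemma pind_stl: "prefix_independent E \<phi> \<Longrightarrow> is_play E x \<Longrightarrow> \<phi> x = \<phi> (stl x)"
  unfolding prefix_independent_def
proof -
  assume H: "\<forall>\<rho> \<rho>' i j. is_play E \<rho> \<and> is_play E \<rho>' \<and> sdrop i \<rho> = sdrop j \<rho>' \<longrightarrow> \<phi> \<rho> = \<phi> \<rho>'" and p: "is_play E x"
  have "sdrop 1 x = sdrop 0 (stl x)" by (simp)
  then show "\<phi> x = \<phi> (stl x)" using H p play_stl[OF p] by (blast)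
qed

lemma decomp:
  assumes u: "u \<in> Vp" and s1: "\<sigma>1 \<in> strategies V1 E" and s2: "\<sigma>2 \<in> strategies V2 E"
    and meas: "\<phi> \<in> borel_measurable S" and bnd: "\<forall>\<rho>. is_play E \<rho> \<longrightarrow> \<bar>\<phi> \<rho>\<bar> \<le> W"
    and pind: "prefix_independent E \<phi>"
  shows "integral\<^sup>L (PM \<sigma>1 \<sigma>2 u) \<phi> = (\<Sum>v\<in>E u. d u v * integral\<^sup>L (PM (\<lambda>h. \<sigma>1 (u#h)) (\<lambda>h. \<sigma>2 (u#h)) v) \<phi>)"
proof -
  let ?M = "PM \<sigma>1 \<sigma>2 u"
  interpret M: prob_space ?M by (rule PM_prob)
  define A where "A v = {\<omega>::'v stream. \<omega> !! Suc 0 = v}" for v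
  have As: "A v \<in> sets ?M" for v unfolding A_def using A_sets PM_sets by (blast)
  have mphi: "\<phi> \<in> borel_measurable ?M" using meas measurable_cong_sets[OF PM_sets refl] by (blast)
  have mstlM: "stl \<in> measurable ?M S"
    using measurable_stl[of "count_space UNIV"] measurable_cong_sets[OF PM_sets refl] by (blast)
  have mphis: "(\<lambda>x. \<phi> (stl x)) \<in> borel_measurable ?M"
    by (rule measurable_compose[OF mstlM meas])
  have AEp: "AE \<omega> in ?M. is_play E \<omega> \<and> shd \<omega> = u"
    using PM_AE_play[OF s1 s2] PM_AE_start by (auto elim: AE_mp intro: AE_I2)
  have mi: "(\<lambda>x. indicator (A v) x * \<phi> (stl x)) \<in> borel_measurable ?M" for v
    using As mphis by (measurable)
  have integ: "integrable ?M (\<lambda>x. indicator (A v) x * \<phi> (stl x))" for v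
  proof (rule M.integrable_const_bound[where B=W])
    show "AE x in ?M. norm (indicator (A v) x * \<phi> (stl x)) \<le> W"
      using AEp
    proof (rule AE_mp, intro AE_I2 impI)
      fix x assume "is_play E x \<and> shd x = u"
      then have "\<bar>\<phi> (stl x)\<bar> \<le> W" using bnd play_stl by (blast)
      moreover have "0 \<le> W" using calculation by (linarith)
      ultimately show "norm (indicator (A v) x * \<phi> (stl x)) \<le> W" by (auto simp: indicator_def)
    qed
    show "(\<lambda>x. indicator (A v) x * \<phi> (stl x)) \<in> borel_measurable ?M" by (rule mi)
  qed
  have int_v: "d u v * integral\<^sup>L (PM (\<lambda>h. \<sigma>1 (u#h)) (\<lambda>h. \<sigma>2 (u#h)) v) \<phi> = integral\<^sup>L ?M (\<lambda>x. indicator (A v) x * \<phi> (stl x))"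
    if v: "v \<in> E u" for v
  proof -
    let ?K0 = "density ?M (\<lambda>x. ennreal (indicator (A v) x / d u v))"
    have c: "d u v > 0" using d_pos[OF u v] .
    have eq: "distr ?K0 S stl = PM (\<lambda>h. \<sigma>1 (u#h)) (\<lambda>h. \<sigma>2 (u#h)) v"
      using shift_measure(1)[OF u v, of \<sigma>1 \<sigma>2] unfolding A_def by (simp)
    have sK0: "sets ?K0 = sets S" by (simp add: PM_sets)
    have mstl: "stl \<in> measurable ?K0 S"
      using measurable_stl[of "count_space UNIV"] measurable_cong_sets[OF sK0 refl] by (blast)
    have "integral\<^sup>L (PM (\<lambda>h. \<sigma>1 (u#h)) (\<lambda>h. \<sigma>2 (u#h)) v) \<phi> = integral\<^sup>L ?K0 (\<lambda>x. \<phi> (stl x))"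
      unfolding eq[symmetric] by (rule integral_distr[OF mstl meas])
    also have "\<dots> = integral\<^sup>L ?M (\<lambda>x. (indicator (A v) x / d u v) *\<^sub>R \<phi> (stl x))"
    proof (rule integral_density)
      show "(\<lambda>x. \<phi> (stl x)) \<in> borel_measurable ?M" by (rule mphis)
      show "(\<lambda>x. indicator (A v) x / d u v) \<in> borel_measurable ?M" using As by (measurable)
      show "AE x in ?M. 0 \<le> indicator (A v) x / d u v" using c by (simp)
    qed
    also have "\<dots> = integral\<^sup>L ?M (\<lambda>x. (indicator (A v) x * \<phi> (stl x)) / d u v)"
      by (simp)
    also have "\<dots> = integral\<^sup>L ?M (\<lambda>x. indicator (A v) x * \<phi> (stl x)) / d u v"
      by (rule integral_divide_zero)
    finally show ?thesis using c by (simp)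
  qed
  have "integral\<^sup>L ?M \<phi> = integral\<^sup>L ?M (\<lambda>x. \<Sum>v\<in>E u. indicator (A v) x * \<phi> (stl x))"
  proof (rule integral_cong_AE)
    show "\<phi> \<in> borel_measurable ?M" by (rule mphi)
    show "(\<lambda>x. \<Sum>v\<in>E u. indicator (A v) x * \<phi> (stl x)) \<in> borel_measurable ?M"
      using mi by (measurable)
    show "AE x in ?M. \<phi> x = (\<Sum>v\<in>E u. indicator (A v) x * \<phi> (stl x))"
      using AEp
    proof (rule AE_mp, intro AE_I2 impI)
      fix x assume H: "is_play E x \<and> shd x = u"
      then have x1: "x !! Suc 0 \<in> E u" unfolding is_play_def by (metis snth.simps(1))
      have "(\<Sum>v\<in>E u. indicator (A v) x * \<phi> (stl x)) = (\<Sum>v\<in>E u. if x !! Suc 0 = v then \<phi> (stl x) else 0)"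
        by (rule sum.cong, simp_all add: A_def indicator_def)
      also have "\<dots> = \<phi> (stl x)" using x1 by (simp)
      finally show "\<phi> x = (\<Sum>v\<in>E u. indicator (A v) x * \<phi> (stl x))"
        using pind_stl[OF pind] H by (simp)
    qed
  qed
  also have "\<dots> = (\<Sum>v\<in>E u. integral\<^sup>L ?M (\<lambda>x. indicator (A v) x * \<phi> (stl x)))"
    by (rule Bochner_Integration.integral_sum) (rule integ)
  also have "\<dots> = (\<Sum>v\<in>E u. d u v * integral\<^sup>L (PM (\<lambda>h. \<sigma>1 (u#h)) (\<lambda>h. \<sigma>2 (u#h)) v) \<phi>)"
    by (rule sum.cong[OF refl], rule int_v[symmetric])
  finally show ?thesis .
qed

lemma payoff_bound:
  assumes s1: "\<sigma>1 \<in> strategies V1 E" and s2: "\<sigma>2 \<in> strategies V2 E"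
    and meas: "\<phi> \<in> borel_measurable S" and bnd: "\<forall>\<rho>. is_play E \<rho> \<longrightarrow> \<bar>\<phi> \<rho>\<bar> \<le> W"
  shows "- W \<le> expected_payoff V1 V2 d \<phi> \<sigma>1 \<sigma>2 v \<and> expected_payoff V1 V2 d \<phi> \<sigma>1 \<sigma>2 v \<le> W"
proof -
  let ?M = "PM \<sigma>1 \<sigma>2 v"
  interpret M: prob_space ?M by (rule PM_prob)
  have mphi: "\<phi> \<in> borel_measurable ?M" using meas measurable_cong_sets[OF PM_sets refl] by (blast)
  have AEb: "AE x in ?M. \<bar>\<phi> x\<bar> \<le> W"
    using PM_AE_play[OF s1 s2] by (rule AE_mp, intro AE_I2 impI, use bnd in blast)
  have int: "integrable ?M \<phi>"
    by (rule M.integrable_const_bound[where B=W]) (use AEb mphi in \<open>simp\<close>, rule mphi)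
  have "integral\<^sup>L ?M \<phi> \<le> W"
    by (rule M.integral_le_const[OF int]) (use AEb in \<open>auto elim: AE_mp intro: AE_I2\<close>)
  moreover have "- W \<le> integral\<^sup>L ?M \<phi>"
    by (rule M.integral_ge_const[OF int]) (use AEb in \<open>auto elim: AE_mp intro: AE_I2\<close>)
  ultimately show ?thesis unfolding expected_payoff_def by (simp)
qed

lemma strat_shift: "\<sigma> \<in> strategies Vi E \<Longrightarrow> (\<lambda>h. \<sigma> (u#h)) \<in> strategies Vi E"
  unfolding strategies_def by (auto)

lemma some_E: "(SOME x. x \<in> E w) \<in> E w"
  using E_ne[of w] some_in_eq by (blast)

lemma strat_default: "(\<lambda>h. SOME x. x \<in> E (last h)) \<in> strategies Vi E"
  unfolding strategies_def using some_E by (auto)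

lemma strat_ne: "strategies Vi E \<noteq> {}" using strat_default by (blast)

lemma PM_cong2:
  assumes "\<And>h. h \<noteq> [] \<Longrightarrow> hd h = v \<Longrightarrow> \<sigma>2 h = \<sigma>2' h"
  shows "PM \<sigma>1 \<sigma>2 v = PM \<sigma>1 \<sigma>2' v"
proof -
  have "prefix_prob V1 V2 d \<sigma>1 \<sigma>2 v = prefix_prob V1 V2 d \<sigma>1 \<sigma>2' v"
  proof (rule ext)
    fix xs :: "'v list"
    show "prefix_prob V1 V2 d \<sigma>1 \<sigma>2 v xs = prefix_prob V1 V2 d \<sigma>1 \<sigma>2' v xs"
    proof (cases "xs = [] \<or> hd xs \<noteq> v")
      case True then show ?thesis by (auto simp: prefix_prob_def)
    next
      case False
      have "trans_prob V1 V2 d \<sigma>1 \<sigma>2 (take k xs) (xs ! k) = trans_prob V1 V2 d \<sigma>1 \<sigma>2' (take k xs) (xs ! k)"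
        if "k \<in> {1..<length xs}" for k
      proof -
        have "take k xs \<noteq> []" "hd (take k xs) = v" using that False by (auto)+
        then show ?thesis using assms by (simp add: trans_prob_def)
      qed
      then have "(\<Prod>k\<in>{1..<length xs}. trans_prob V1 V2 d \<sigma>1 \<sigma>2 (take k xs) (xs ! k)) = (\<Prod>k\<in>{1..<length xs}. trans_prob V1 V2 d \<sigma>1 \<sigma>2' (take k xs) (xs ! k))"
        by (rule prod.cong[OF refl])
      then show ?thesis using False by (simp add: prefix_prob_def)
    qed
  qed
  then show ?thesis unfolding play_measure_def by (simp)
qed

definition comb :: "('v \<Rightarrow> 'v list \<Rightarrow> 'v) \<Rightarrow> 'v list \<Rightarrow> 'v" where
  "comb \<tau> h = (if h \<noteq> [] \<and> tl h \<noteq> [] then \<tau> (hd (tl h)) (tl h) else SOME x. x \<in> E (last h))"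

lemma comb_strat:
  assumes "\<And>v. \<tau> v \<in> strategies V2 E"
  shows "comb \<tau> \<in> strategies V2 E"
  unfolding strategies_def
proof (intro CollectI allI impI)
  fix h assume h: "h \<noteq> [] \<and> last h \<in> V2"
  show "comb \<tau> h \<in> E (last h)"
  proof (cases "tl h \<noteq> []")
    case True
    then have lt: "last (tl h) = last h" using h by (metis last_tl)
    have "\<tau> (hd (tl h)) (tl h) \<in> E (last (tl h))" using assms[of "hd (tl h)"] True h lt unfolding strategies_def by (auto)
    then show ?thesis using True h lt by (simp add: comb_def)
  next
    case False
    then show ?thesis using h some_E by (auto simp: comb_def)
  qed
qed

lemma PM_comb: "PM \<sigma>1 (\<lambda>h. comb \<tau> (u#h)) v = PM \<sigma>1 (\<tau> v) v"
  by (rule PM_cong2) (simp add: comb_def)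

lemma value_le:
  assumes u: "u \<in> Vp" and meas: "\<phi> \<in> borel_measurable S" and bnd: "\<forall>\<rho>. is_play E \<rho> \<longrightarrow> \<bar>\<phi> \<rho>\<bar> \<le> W"
    and pind: "prefix_independent E \<phi>"
  shows "game_value V1 V2 E d \<phi> u \<le> (\<Sum>v\<in>E u. d u v * game_value V1 V2 E d \<phi> v)"
proof -
  let ?St1 = "strategies V1 E" and ?St2 = "strategies V2 E"
  let ?ep = "\<lambda>\<sigma>1 \<sigma>2 v. expected_payoff V1 V2 d \<phi> \<sigma>1 \<sigma>2 v"
  let ?g = "\<lambda>\<sigma>1 v. INF \<tau>\<in>?St2. ?ep \<sigma>1 \<tau> v"
  let ?c = "\<Sum>v\<in>E u. d u v * game_value V1 V2 E d \<phi> v"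
  have epb: "- W \<le> ?ep \<sigma>1 \<sigma>2 v \<and> ?ep \<sigma>1 \<sigma>2 v \<le> W" if "\<sigma>1 \<in> ?St1" "\<sigma>2 \<in> ?St2" for \<sigma>1 \<sigma>2 v
    by (rule payoff_bound[OF that meas bnd])
  have bb: "bdd_below ((\<lambda>\<tau>. ?ep \<sigma>1 \<tau> v) ` ?St2)" if "\<sigma>1 \<in> ?St1" for \<sigma>1 v
    using epb[OF that] by (auto simp: bdd_below_def)
  have gle: "?g \<sigma>1 v \<le> W" if "\<sigma>1 \<in> ?St1" for \<sigma>1 v
  proof -
    have "?g \<sigma>1 v \<le> ?ep \<sigma>1 (\<lambda>h. SOME x. x \<in> E (last h)) v"
      by (rule cINF_lower[OF bb[OF that] strat_default])
    also have "\<dots> \<le> W" using epb[OF that strat_default] by (simp)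
    finally show ?thesis .
  qed
  have gv: "?g \<sigma>1 v \<le> game_value V1 V2 E d \<phi> v" if "\<sigma>1 \<in> ?St1" for \<sigma>1 v
    unfolding game_value_def
  proof (rule cSUP_upper[OF that])
    show "bdd_above ((\<lambda>\<sigma>1. ?g \<sigma>1 v) ` ?St1)" using gle by (auto simp: bdd_above_def)
  qed
  have dnn: "\<And>v. 0 \<le> d u v" using d_nonneg[OF u] .
  show ?thesis unfolding game_value_def[of _ _ _ _ _ u]
  proof (rule cSUP_least[OF strat_ne])
    fix \<sigma>1 assume s1: "\<sigma>1 \<in> ?St1"
    let ?s1 = "\<lambda>h. \<sigma>1 (u#h)"
    have s1': "?s1 \<in> ?St1" by (rule strat_shift[OF s1])
    show "?g \<sigma>1 u \<le> ?c"
    proof (rule field_le_epsilon)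
      fix e :: real assume e: "0 < e"
      have "\<forall>v. \<exists>\<tau>. \<tau> \<in> ?St2 \<and> ?ep ?s1 \<tau> v < ?g ?s1 v + e"
      proof
        fix v
        have "\<exists>x\<in>(\<lambda>\<tau>. ?ep ?s1 \<tau> v) ` ?St2. x < ?g ?s1 v + e"
          by (rule cInf_lessD) (use strat_ne e in \<open>auto\<close>)
        then show "\<exists>\<tau>. \<tau> \<in> ?St2 \<and> ?ep ?s1 \<tau> v < ?g ?s1 v + e" by (blast)
      qed
      then obtain \<tau> where \<tau>: "\<And>v. \<tau> v \<in> ?St2" "\<And>v. ?ep ?s1 (\<tau> v) v < ?g ?s1 v + e"
        by (metis)
      let ?s2 = "comb \<tau>"
      have s2: "?s2 \<in> ?St2" by (rule comb_strat[OF \<tau>(1)])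
      have "?g \<sigma>1 u \<le> ?ep \<sigma>1 ?s2 u" by (rule cINF_lower[OF bb[OF s1] s2])
      also have "\<dots> = (\<Sum>v\<in>E u. d u v * ?ep ?s1 (\<lambda>h. ?s2 (u#h)) v)"
        unfolding expected_payoff_def by (rule decomp[OF u s1 s2 meas bnd pind])
      also have "\<dots> = (\<Sum>v\<in>E u. d u v * ?ep ?s1 (\<tau> v) v)"
        unfolding expected_payoff_def PM_comb ..
      also have "\<dots> \<le> (\<Sum>v\<in>E u. d u v * (game_value V1 V2 E d \<phi> v + e))"
      proof (rule sum_mono)
        fix v assume "v \<in> E u"
        have "?ep ?s1 (\<tau> v) v \<le> game_value V1 V2 E d \<phi> v + e"
          using \<tau>(2)[of v] gv[OF s1', of v] by (linarith)
        then show "d u v * ?ep ?s1 (\<tau> v) v \<le> d u v * (game_value V1 V2 E d \<phi> v + e)"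
          by (rule mult_left_mono[OF _ dnn])
      qed
      also have "\<dots> = ?c + e * (\<Sum>v\<in>E u. d u v)"
        by (simp add: algebra_simps sum.distrib sum_distrib_left)
      also have "\<dots> = ?c + e" using d_sum[OF u] by (simp)
      finally show "?g \<sigma>1 u \<le> ?c + e" .
    qed
  qed
qed

end

lemma invertible_of_det:
  fixes A :: "real mat"
  assumes A: "A \<in> carrier_mat n n" and dA: "Determinant.det A \<noteq> 0"
  shows "invertible_mat A"
proof -
  have "A \<in> Units (ring_mat TYPE(real) n ())" by (rule det_non_zero_imp_unit[OF A dA])
  then obtain B where B: "B \<in> carrier_mat n n" "B * A = 1\<^sub>m n" "A * B = 1\<^sub>m n"
    unfolding Units_def by (auto simp: ring_mat_simps)
  show ?thesis unfolding invertible_mat_def inverts_mat_def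
    using A B by (auto simp: square_mat.simps)
qed

lemma kernel_row:
  fixes y :: "real vec"
  assumes y: "y \<in> carrier_vec m" and i: "i < m"
  shows "((1\<^sub>m m - mat m m (\<lambda>(i, j). Q i j)) *\<^sub>v y) $ i = y $ i - (\<Sum>j<m. Q i j * y $ j)"
proof -
  have "((1\<^sub>m m - mat m m (\<lambda>(i, j). Q i j)) *\<^sub>v y) $ i = (\<Sum>j\<in>{0..<m}. ((if i = j then 1 else 0) - Q i j) * y $ j)"
    using y i by (simp add: scalar_prod_def)
  also have "\<dots> = (\<Sum>j\<in>{0..<m}. (if i = j then y $ j else 0) - Q i j * y $ j)"
    by (rule sum.cong, simp_all add: algebra_simps)
  also have "\<dots> = (\<Sum>j\<in>{0..<m}. (if i = j then y $ j else 0)) - (\<Sum>j\<in>{0..<m}. Q i j * y $ j)"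
    by (rule sum_subtractf)
  also have "\<dots> = y $ i - (\<Sum>j<m. Q i j * y $ j)"
    using i by (simp add: atLeast0LessThan)
  finally show ?thesis .
qed

lemma substoch_kernel:
  fixes Q :: "nat \<Rightarrow> nat \<Rightarrow> real" and z :: "nat \<Rightarrow> real"
  assumes nn: "\<And>i j. i < m \<Longrightarrow> j < m \<Longrightarrow> Q i j \<ge> 0" and rs: "\<And>i. i < m \<Longrightarrow> (\<Sum>j<m. Q i j) \<le> 1"
    and fx: "\<And>i. i < m \<Longrightarrow> z i = (\<Sum>j<m. Q i j * z j)" and nz: "i1 < m" "z i1 \<noteq> 0"
  shows "\<exists>T. T \<subseteq> {..<m} \<and> T \<noteq> {} \<and> (\<forall>i\<in>T. (\<Sum>j<m. Q i j) = 1 \<and> (\<forall>j<m. Q i j > 0 \<longrightarrow> j \<in> T))"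
proof -
  define c where "c = Max ((\<lambda>j. \<bar>z j\<bar>) ` {..<m})"
  have fin: "finite ((\<lambda>j. \<bar>z j\<bar>) ` {..<m})" by (simp)
  have ne: "(\<lambda>j. \<bar>z j\<bar>) ` {..<m} \<noteq> {}" using nz by (auto)
  have le_c: "\<bar>z j\<bar> \<le> c" if "j < m" for j unfolding c_def using fin that by (auto intro: Max_ge)
  have cpos: "c > 0" using le_c[OF nz(1)] nz by (linarith)
  obtain i2 where i2: "i2 < m" "\<bar>z i2\<bar> = c" using Max_in[OF fin ne] unfolding c_def by (auto)
  define T where "T = {i. i < m \<and> \<bar>z i\<bar> = c}"
  have "\<forall>i\<in>T. (\<Sum>j<m. Q i j) = 1 \<and> (\<forall>j<m. Q i j > 0 \<longrightarrow> j \<in> T)"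
  proof
    fix i assume iT: "i \<in> T"
    then have i: "i < m" and zi: "\<bar>z i\<bar> = c" unfolding T_def by auto
    have "c = \<bar>\<Sum>j<m. Q i j * z j\<bar>" using fx[OF i] zi by (simp)
    also have "\<dots> \<le> (\<Sum>j<m. \<bar>Q i j * z j\<bar>)" by (rule sum_abs)
    also have "\<dots> = (\<Sum>j<m. Q i j * \<bar>z j\<bar>)"
      by (rule sum.cong, simp_all add: abs_mult nn[OF i])
    finally have c1: "c \<le> (\<Sum>j<m. Q i j * \<bar>z j\<bar>)" .
    have c2: "(\<Sum>j<m. Q i j * \<bar>z j\<bar>) \<le> (\<Sum>j<m. Q i j * c)"
      by (rule sum_mono, simp add: mult_left_mono le_c nn[OF i])
    have c3: "(\<Sum>j<m. Q i j * c) = c * (\<Sum>j<m. Q i j)" by (simp add: sum_distrib_left mult.commute)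
    have "c * (\<Sum>j<m. Q i j) \<le> c * 1" using rs[OF i] cpos by (simp add: mult_left_mono)
    have "c * 1 \<le> c * (\<Sum>j<m. Q i j)" using c1 c2 c3 by (linarith)
    then have "1 \<le> (\<Sum>j<m. Q i j)" using cpos by (rule mult_left_le_imp_le)
    then have s1: "(\<Sum>j<m. Q i j) = 1" using rs[OF i] by (linarith)
    have "(\<Sum>j<m. Q i j * (c - \<bar>z j\<bar>)) = (\<Sum>j<m. Q i j * c) - (\<Sum>j<m. Q i j * \<bar>z j\<bar>)"
      by (simp add: right_diff_distrib sum_subtractf)
    also have "\<dots> \<le> 0" using c1 c3 s1 by (simp)
    finally have z0: "(\<Sum>j<m. Q i j * (c - \<bar>z j\<bar>)) \<le> 0" .
    have nnt: "\<forall>j\<in>{..<m}. 0 \<le> Q i j * (c - \<bar>z j\<bar>)" using nn[OF i] le_c by (simp)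
    have "0 \<le> (\<Sum>j<m. Q i j * (c - \<bar>z j\<bar>))" by (rule sum_nonneg) (use nnt in \<open>blast\<close>)
    then have "(\<Sum>j<m. Q i j * (c - \<bar>z j\<bar>)) = 0" using z0 by (linarith)
    moreover have "(\<Sum>j<m. Q i j * (c - \<bar>z j\<bar>)) = 0 \<longleftrightarrow> (\<forall>j\<in>{..<m}. Q i j * (c - \<bar>z j\<bar>) = 0)"
      by (rule sum_nonneg_eq_0_iff) (use nnt in \<open>auto\<close>)
    ultimately have allz: "\<forall>j\<in>{..<m}. Q i j * (c - \<bar>z j\<bar>) = 0" by (blast)
    have "\<forall>j<m. Q i j > 0 \<longrightarrow> j \<in> T"
    proof (intro allI impI)
      fix j assume j: "j < m" and q: "Q i j > 0"
      have "Q i j * (c - \<bar>z j\<bar>) = 0" using allz j by (blast)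
      then have "c - \<bar>z j\<bar> = 0" using q by (simp)
      then show "j \<in> T" using j unfolding T_def by (simp)
    qed
    then show "(\<Sum>j<m. Q i j) = 1 \<and> (\<forall>j<m. Q i j > 0 \<longrightarrow> j \<in> T)" using s1 by (blast)
  qed
  moreover have "T \<subseteq> {..<m}" "T \<noteq> {}" using i2 unfolding T_def by (auto)+
  ultimately show ?thesis by (blast)
qed

theorem proposition12:
  fixes V1 V2 Vp :: "'v::finite set"
    and E :: "'v \<Rightarrow> 'v set"
    and d :: "'v \<Rightarrow> 'v \<Rightarrow> real"
    and \<phi> :: "'v stream \<Rightarrow> real"
    and r :: "'v \<Rightarrow> real"
    and m :: nat
    and u :: "nat \<Rightarrow> 'v"
  assumes game: "stochastic_game V1 V2 Vp E d"
    and meas: "\<phi> \<in> borel_measurable (stream_space (count_space UNIV))"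
    and bdd: "bounded_objective E \<phi>"
    and pind: "prefix_independent E \<phi>"
    and r_def: "r = game_value V1 V2 E d \<phi>"
    and m_def: "m = length (boundary_values Vp E r)"
    and m_pos: "m \<ge> 1"
    and u_bd: "\<forall>i<m. is_boundary Vp E r (u i) \<and> r (u i) = boundary_values Vp E r ! i"
  shows "invertible_mat
           (1\<^sub>m m - mat m m (\<lambda>(i, j). \<Sum>v'\<in>E (u i) \<inter> {x. r x = boundary_values Vp E r ! j}. d (u i) v'))"
proof -
  interpret sg V1 V2 Vp E d by (rule sg.intro[OF game])
  from bdd obtain W :: int where W: "\<forall>\<rho>. is_play E \<rho> \<longrightarrow> \<bar>\<phi> \<rho>\<bar> \<le> of_int W"
    unfolding bounded_objective_def by (blast)
  have bnd: "\<forall>\<rho>. is_play E \<rho> \<longrightarrow> \<bar>\<phi> \<rho>\<bar> \<le> real_of_int W" using W by (simp)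
  have vle: "r w \<le> (\<Sum>v\<in>E w. d w v * r v)" if "w \<in> Vp" for w
    unfolding r_def by (rule value_le[OF that meas bnd pind])
  define b where "b = boundary_values Vp E r"
  define Bs where "Bs = {r v | v. is_boundary Vp E r v}"
  have Bs_img: "Bs = r ` {v. is_boundary Vp E r v}" unfolding Bs_def by (auto)
  have finB: "finite Bs" unfolding Bs_img by (simp)
  have bB: "b = sorted_list_of_set Bs" unfolding b_def boundary_values_def Bs_def ..
  have setb: "set b = Bs" using finB bB by (simp)
  have sortb: "sorted b" using bB by (simp)
  have distb: "distinct b" using bB by (simp)
  have mb: "m = length b" using m_def b_def by (simp)
  define Q where "Q i j = (\<Sum>v'\<in>E (u i) \<inter> {x. r x = b ! j}. d (u i) v')" for i j
  have uVp: "u i \<in> Vp" if "i < m" for i using u_bd that unfolding is_boundary_def by (blast)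
  have ru: "r (u i) = b ! i" if "i < m" for i using u_bd that unfolding b_def by (blast)
  have nsub: "\<not> E (u i) \<subseteq> val_class r (u i)" if "i < m" for i using u_bd that unfolding is_boundary_def by (blast)
  have Qnn: "Q i j \<ge> 0" if "i < m" for i j
    unfolding Q_def by (rule sum_nonneg) (use d_nonneg[OF uVp[OF that]] in \<open>blast\<close>)
  have Qrow: "(\<Sum>j<m. Q i j) = (\<Sum>v\<in>E (u i). if r v \<in> set b then d (u i) v else 0)" if i: "i < m" for i
  proof -
    have "(\<Sum>j<m. Q i j) = (\<Sum>j<m. \<Sum>v\<in>E (u i). if r v = b ! j then d (u i) v else 0)"
    proof (rule sum.cong[OF refl])
      fix j
      have "E (u i) \<inter> {x. r x = b ! j} = {x \<in> E (u i). r x = b ! j}" by (blast)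
      then show "Q i j = (\<Sum>v\<in>E (u i). if r v = b ! j then d (u i) v else 0)"
        unfolding Q_def by (simp add: sum.inter_filter)
    qed
    also have "\<dots> = (\<Sum>v\<in>E (u i). \<Sum>j<m. if r v = b ! j then d (u i) v else 0)"
      by (rule sum.swap)
    also have "\<dots> = (\<Sum>v\<in>E (u i). if r v \<in> set b then d (u i) v else 0)"
    proof (rule sum.cong[OF refl])
      fix v
      show "(\<Sum>j<m. if r v = b ! j then d (u i) v else 0) = (if r v \<in> set b then d (u i) v else 0)"
      proof (cases "r v \<in> set b")
        case True
        then obtain k where k: "k < m" "b ! k = r v" using mb by (auto simp: in_set_conv_nth)
        have "(\<Sum>j<m. if r v = b ! j then d (u i) v else 0) = (\<Sum>j<m. if j = k then d (u i) v else 0)"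
        proof (rule sum.cong[OF refl])
          fix j assume "j \<in> {..<m}"
          then have "r v = b ! j \<longleftrightarrow> j = k" using k distb mb nth_eq_iff_index_eq[of b k j] by (auto)
          then show "(if r v = b ! j then d (u i) v else 0) = (if j = k then d (u i) v else 0)" by (simp)
        qed
        also have "\<dots> = d (u i) v" using k by (simp)
        finally show ?thesis using True by (simp)
      next
        case False
        then have "\<And>j. j < m \<Longrightarrow> r v \<noteq> b ! j" using mb by (auto simp: in_set_conv_nth)
        then show ?thesis using False by (simp)
      qed
    qed
    finally show ?thesis .
  qed
  have Qrow_le: "(\<Sum>j<m. Q i j) \<le> 1" if i: "i < m" for i
  proof -
    have "(\<Sum>v\<in>E (u i). if r v \<in> set b then d (u i) v else 0) \<le> (\<Sum>v\<in>E (u i). d (u i) v)"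
      by (rule sum_mono) (use d_nonneg[OF uVp[OF i]] in \<open>simp\<close>)
    then show ?thesis using Qrow[OF i] d_sum[OF uVp[OF i]] by (simp)
  qed
  let ?A = "1\<^sub>m m - mat m m (\<lambda>(i, j). Q i j)"
  have Acar: "?A \<in> carrier_mat m m" by (rule minus_carrier_mat, rule mat_carrier)
  have "Determinant.det ?A \<noteq> 0"
  proof
    assume "Determinant.det ?A = 0"
    then obtain y where y: "y \<in> carrier_vec m" "y \<noteq> 0\<^sub>v m" "?A *\<^sub>v y = 0\<^sub>v m"
      using det_0_iff_vec_prod_zero[OF Acar] by (blast)
    have fx: "y $ i = (\<Sum>j<m. Q i j * y $ j)" if "i < m" for i
      using kernel_row[OF y(1) that, of Q] y(3) that by (simp)
    obtain i1 where i1: "i1 < m" "y $ i1 \<noteq> 0"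
    proof (rule ccontr)
      assume "\<not> thesis"
      then have "\<forall>i<m. y $ i = 0" using that by (blast)
      then have "y = 0\<^sub>v m" using y(1) by (auto)
      then show False using y(2) by (simp)
    qed
    obtain T where T: "T \<subseteq> {..<m}" "T \<noteq> {}" "\<forall>i\<in>T. (\<Sum>j<m. Q i j) = 1 \<and> (\<forall>j<m. Q i j > 0 \<longrightarrow> j \<in> T)"
      using substoch_kernel[of m Q "\<lambda>j. y $ j", OF Qnn Qrow_le fx i1] by (blast)
    have finT: "finite T" using T(1) finite_subset by (blast)
    define i0 where "i0 = Max T"
    have i0T: "i0 \<in> T" unfolding i0_def using finT T(2) by (rule Max_in)
    have i0m: "i0 < m" using i0T T(1) by (blast)
    have i0max: "k \<le> i0" if "k \<in> T" for k unfolding i0_def using finT that by (rule Max_ge)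
    define w where "w = u i0"
    have wVp: "w \<in> Vp" unfolding w_def by (rule uVp[OF i0m])
    have rw: "r w = b ! i0" unfolding w_def by (rule ru[OF i0m])
    have F1: "(\<Sum>v\<in>E w. if r v \<in> set b then d w v else 0) = (\<Sum>v\<in>E w. d w v)"
      using Qrow[OF i0m] T(3) i0T d_sum[OF wVp] unfolding w_def by (simp)
    have allin: "r v \<in> set b" if v: "v \<in> E w" for v
    proof (rule ccontr)
      assume nv: "r v \<notin> set b"
      have "(\<Sum>v\<in>E w. if r v \<in> set b then d w v else 0) < (\<Sum>v\<in>E w. d w v)"
      proof (rule sum_strict_mono_ex1)
        show "finite (E w)" by (simp)
        show "\<forall>x\<in>E w. (if r x \<in> set b then d w x else 0) \<le> d w x" using d_nonneg[OF wVp] by (simp)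
        show "\<exists>a\<in>E w. (if r a \<in> set b then d w a else 0) < d w a" using v nv d_pos[OF wVp v] by (auto)
      qed
      then show False using F1 by (simp)
    qed
    have vle_w: "r v \<le> r w" if v: "v \<in> E w" for v
    proof -
      obtain k where k: "k < m" "b ! k = r v" using allin[OF v] mb by (auto simp: in_set_conv_nth)
      have "d w v \<le> Q i0 k"
        unfolding Q_def w_def[symmetric]
        by (rule member_le_sum) (use v k d_nonneg[OF wVp] in \<open>auto\<close>)
      then have "Q i0 k > 0" using d_pos[OF wVp v] by (linarith)
      then have "k \<in> T" using T(3) i0T k(1) by (blast)
      then have "k \<le> i0" by (rule i0max)
      then have "b ! k \<le> b ! i0" using sortb i0m mb by (simp add: sorted_nth_mono)
      then show ?thesis using k rw by (simp)
    qed
    obtain v1 where v1: "v1 \<in> E w" "r v1 \<noteq> r w"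
      using nsub[OF i0m] unfolding w_def[symmetric] val_class_def by (blast)
    have "(\<Sum>v\<in>E w. d w v * r v) < (\<Sum>v\<in>E w. d w v * r w)"
    proof (rule sum_strict_mono_ex1)
      show "finite (E w)" by (simp)
      show "\<forall>x\<in>E w. d w x * r x \<le> d w x * r w"
        using vle_w d_nonneg[OF wVp] by (auto intro: mult_left_mono)
      have "r v1 < r w" using vle_w[OF v1(1)] v1(2) by (linarith)
      then have "d w v1 * r v1 < d w v1 * r w" using d_pos[OF wVp v1(1)] by (simp)
      then show "\<exists>a\<in>E w. d w a * r a < d w a * r w" using v1(1) by (blast)
    qed
    also have "\<dots> = r w * (\<Sum>v\<in>E w. d w v)" by (simp add: sum_distrib_left mult.commute)
    also have "\<dots> = r w" using d_sum[OF wVp] by (simp)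
    finally show False using vle[OF wVp] by (linarith)
  qed
  then have "invertible_mat ?A" by (rule invertible_of_det[OF Acar])
  then show ?thesis unfolding Q_def b_def .
qed


end
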